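(* Let $\mathcal D$ be a $k$-oriented Spherical Diagram and $H$ an attractor hull of $\mathcal D$. If an arc of $\mathcal D$ intersects the interior of $H$, then it intersects the boundary of $H$ in at most one point.
   Context: A geodesic arc on the unit sphere in $\mathbb R^3$ is the unique shortest curve joining two non-antipodal points. An arc $a$ blocks an arc $b$ (equivalently, $b$ hits $a$) if an endpoint of $b$ lies in the relative interior of $a$. A Spherical Diagram (SD) is a finite non-empty collection $\mathcal D$ of pairwise interior-disjoint geodesic arcs on the unit sphere such that each arc of $\mathcal D$ is blocked by arcs of $\mathcal D$ at each of its endpoints. An SD $\mathcal D$ is $k$-oriented if there exist a set $P$ of $k$ points on the unit sphere (poles), no two antipodal, and a function $f\colon\mathcal D\to P$ such that each arc $a\in\mathcal D$ lies on a great circle through $f(a)$ but contains neither $f(a)$ nor its antipode $-f(a)$ (the anti-pole of $f(a)$). An attractor of a $k$-oriented SD is a set of $k$ points, no two antipodal, chosen among its poles and anti-poles. An attractor hull is the spherical convex hull of an attractor (the whole sphere if the attractor is not contained in any open hemisphere). "Intersect" means "have non-empty intersection". *)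

theory Defs
  imports "HOL-Analysis.Analysis"
begin

type_synonym point = "real^3"

abbreviation S2 :: "point set" where "S2 \<equiv> sphere 0 1"

definition nrm :: "point \<Rightarrow> point" where "nrm x = x /\<^sub>R norm x"

text \<open>An arc is represented by its pair of endpoints (p,q): distinct,
  non-antipodal points of the unit sphere.\<close>
definition is_arc :: "point \<times> point \<Rightarrow> bool" where
  "is_arc a \<longleftrightarrow> fst a \<in> S2 \<and> snd a \<in> S2 \<and> fst a \<noteq> snd a \<and> fst a \<noteq> - snd a"

definition arc_set :: "point \<times> point \<Rightarrow> point set" where
  "arc_set a = nrm ` closed_segment (fst a) (snd a)"

definition arc_relint :: "point \<times> point \<Rightarrow> point set" where
  "arc_relint a = nrm ` open_segment (fst a) (snd a)"

definition blocks :: "point \<times> point \<Rightarrow> point \<times> point \<Rightarrow> bool" where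
  "blocks a b \<longleftrightarrow> fst b \<in> arc_relint a \<or> snd b \<in> arc_relint a"

definition spherical_diagram :: "(point \<times> point) set \<Rightarrow> bool" where
  "spherical_diagram D \<longleftrightarrow> finite D \<and> D \<noteq> {} \<and> (\<forall>a\<in>D. is_arc a)
     \<and> (\<forall>a\<in>D. \<forall>b\<in>D. a \<noteq> b \<longrightarrow> arc_relint a \<inter> arc_relint b = {})
     \<and> (\<forall>a\<in>D. (\<exists>b\<in>D. fst a \<in> arc_relint b) \<and> (\<exists>b\<in>D. snd a \<in> arc_relint b))"

definition no_antipodal :: "point set \<Rightarrow> bool" where
  "no_antipodal P \<longleftrightarrow> (\<forall>x\<in>P. \<forall>y\<in>P. y \<noteq> - x)"

definition oriented_by :: "point \<times> point \<Rightarrow> point \<Rightarrow> bool" where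
  "oriented_by a c \<longleftrightarrow> (\<exists>n. n \<noteq> 0 \<and> n \<bullet> c = 0 \<and> (\<forall>x\<in>arc_set a. n \<bullet> x = 0))
     \<and> c \<notin> arc_set a \<and> - c \<notin> arc_set a"

definition orientation :: "nat \<Rightarrow> (point \<times> point) set \<Rightarrow> point set \<Rightarrow> (point \<times> point \<Rightarrow> point) \<Rightarrow> bool" where
  "orientation k D P f \<longleftrightarrow> P \<subseteq> S2 \<and> finite P \<and> card P = k \<and> no_antipodal P
     \<and> (\<forall>a\<in>D. f a \<in> P \<and> oriented_by a (f a))"

definition k_oriented_SD :: "nat \<Rightarrow> (point \<times> point) set \<Rightarrow> bool" where
  "k_oriented_SD k D \<longleftrightarrow> spherical_diagram D \<and> (\<exists>P f. orientation k D P f)"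

definition attractor :: "nat \<Rightarrow> point set \<Rightarrow> point set \<Rightarrow> bool" where
  "attractor k P A \<longleftrightarrow> A \<subseteq> P \<union> uminus ` P \<and> finite A \<and> card A = k \<and> no_antipodal A"

definition spherical_hull :: "point set \<Rightarrow> point set" where
  "spherical_hull A = (if \<exists>n. \<forall>x\<in>A. n \<bullet> x > 0 then nrm ` (convex hull A) else S2)"

end

theory Submission
  imports Defs
begin




lemma triple_cross: "cross3 (cross3 (n::real^3) m) d = (n \<bullet> d) *\<^sub>R m - (m \<bullet> d) *\<^sub>R n"
  unfolding cross3_def inner_vec_def vec_eq_iff
  by (simp add: sum_3 forall_3 algebra_simps)

lemma perp_parallel:
  fixes n m d :: point
  assumes "cross3 n m \<noteq> 0" "n \<bullet> d = 0" "m \<bullet> d = 0"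
  shows "d = ((d \<bullet> (cross3 n m)) / ((cross3 n m) \<bullet> (cross3 n m))) *\<^sub>R (cross3 n m)"
proof -
  have "cross3 (cross3 n m) d = 0" using assms by (simp add: triple_cross inner_commute)
  then have "collinear {0, cross3 n m, d}" by (simp add: cross_eq_0)
  then have "cross3 n m = 0 \<or> d = 0 \<or> (\<exists>c. d = c *\<^sub>R cross3 n m)" by (simp only: collinear_lemma)
  then have "\<exists>c. d = c *\<^sub>R cross3 n m" using assms(1) by (metis scale_zero_left)
  then obtain c where c: "d = c *\<^sub>R (cross3 n m)" by blast
  have "(cross3 n m) \<bullet> (cross3 n m) \<noteq> 0" using assms(1) by simp
  then show ?thesis using c by (simp add: inner_commute)
qed

lemma aux_abs: "(x::real)>0 \<Longrightarrow> y>0 \<Longrightarrow> \<bar>1/x - 1/y\<bar> * x = \<bar>y - x\<bar> / y"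
proof -
  assume p: "x>0" "y>0"
  have "1/x - 1/y = (y - x) / (x*y)" using p by (simp add: field_simps)
  then have "\<bar>1/x - 1/y\<bar> = \<bar>y - x\<bar> / (x*y)" using p by (simp add: abs_divide)
  then show ?thesis using p by simp
qed

lemma nrm_lip:
  fixes a b :: point
  assumes "b \<noteq> 0" "a \<noteq> 0"
  shows "norm (nrm a - nrm b) \<le> 2 * norm (a - b) / norm b"
proof -
  have e: "nrm a - nrm b = (1/norm b) *\<^sub>R (a - b) + ((1/norm a) - (1/norm b)) *\<^sub>R a"
    by (simp add: nrm_def algebra_simps divide_inverse)
  have p: "norm a > 0" "norm b > 0" using assms by auto
  have "norm (((1/norm a) - (1/norm b)) *\<^sub>R a) = \<bar>(1/norm a) - (1/norm b)\<bar> * norm a"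
    by simp
  also have "\<dots> = \<bar>norm b - norm a\<bar> / norm b"
    using aux_abs[OF p] .
  also have "\<dots> \<le> norm (a - b) / norm b"
    by (rule divide_right_mono) (metis norm_minus_commute norm_triangle_ineq3, simp)
  finally have 1: "norm (((1/norm a) - (1/norm b)) *\<^sub>R a) \<le> norm (a - b) / norm b" .
  have 2: "norm ((1/norm b) *\<^sub>R (a - b)) = norm (a - b) / norm b" by simp
  have 3: "norm (nrm a - nrm b) \<le> norm ((1/norm b) *\<^sub>R (a - b)) + norm (((1/norm a) - (1/norm b)) *\<^sub>R a)"
    unfolding e by (rule norm_triangle_ineq)
  have 4: "2 * norm (a - b) / norm b = norm (a - b) / norm b + norm (a - b) / norm b"
    by (metis add_divide_distrib mult_2)
  show ?thesis using 1 2 3 4 by linarith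
qed

lemma nrm_S2: "(z::point) \<noteq> 0 \<Longrightarrow> nrm z \<in> S2"
  by (simp add: nrm_def)

lemma nrm_unit: "(x::point) \<in> S2 \<Longrightarrow> nrm x = x"
  by (simp add: nrm_def)

lemma nrm_pos_scale: "(l::real) > 0 \<Longrightarrow> (x::point) \<in> S2 \<Longrightarrow> nrm (l *\<^sub>R x) = x"
  by (simp add: nrm_def)

definition cb :: "point \<Rightarrow> point \<Rightarrow> point \<Rightarrow> bool" where
  "cb u x w \<longleftrightarrow> (\<exists>\<alpha>>0. \<exists>\<beta>>0. x = \<alpha> *\<^sub>R u + \<beta> *\<^sub>R w)"

lemma cb_sym: "cb u x w \<Longrightarrow> cb w x u"
  unfolding cb_def by (metis add.commute)

lemma cone_comb:
  assumes C: "convex C" "0 \<notin> C" and u: "u \<in> nrm ` C" and w: "w \<in> nrm ` C"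
    and x: "x \<in> S2" and cbx: "cb u x w"
  shows "x \<in> nrm ` C"
proof -
  obtain zu where zu: "zu \<in> C" "u = nrm zu" using u by auto
  obtain zw where zw: "zw \<in> C" "w = nrm zw" using w by auto
  obtain \<alpha> \<beta> where ab: "\<alpha> > 0" "\<beta> > 0" "x = \<alpha> *\<^sub>R u + \<beta> *\<^sub>R w" using cbx cb_def by auto
  have nz: "norm zu > 0" "norm zw > 0" using zu zw C by auto
  define a where "a = \<alpha> / norm zu"
  define b where "b = \<beta> / norm zw"
  have apos: "a > 0" "b > 0" using ab nz by (auto simp: a_def b_def)
  have x2: "x = a *\<^sub>R zu + b *\<^sub>R zw"
    using ab(3) zu(2) zw(2) by (simp add: a_def b_def nrm_def divide_inverse mult.commute)
  define c where "c = (a/(a+b)) *\<^sub>R zu + (b/(a+b)) *\<^sub>R zw"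
  have "c \<in> C" unfolding c_def
    using convexD[OF C(1) zu(1) zw(1), of "a/(a+b)" "b/(a+b)"] apos by (simp add: add_divide_distrib[symmetric])
  have xc: "x = (a+b) *\<^sub>R c" unfolding c_def x2 using apos
    by (simp add: scaleR_add_right)
  have "norm x = 1" using x by simp
  then have "(a+b) * norm c = 1" using xc apos by simp
  then have "inverse (norm c) = a + b" by (intro inverse_unique) (simp add: mult.commute)
  then have "nrm c = x" unfolding nrm_def xc by simp
  then show ?thesis using \<open>c \<in> C\<close> by blast
qed




lemma int_char:
  assumes "H \<subseteq> S2"
  shows "x \<in> (top_of_set S2) interior_of H \<longleftrightarrow> x \<in> S2 \<and> (\<exists>r>0. \<forall>y\<in>S2. dist y x < r \<longrightarrow> y \<in> H)"
proof
  assume "x \<in> (top_of_set S2) interior_of H"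
  then obtain T where T: "openin (top_of_set S2) T" "x \<in> T" "T \<subseteq> H" unfolding interior_of_def by blast
  then obtain e where e: "e > 0" "ball x e \<inter> S2 \<subseteq> T" "T \<subseteq> S2" unfolding openin_contains_ball by blast
  have "\<forall>y\<in>S2. dist y x < e \<longrightarrow> y \<in> H"
  proof (intro ballI impI)
    fix y assume "y \<in> S2" "dist y x < e"
    then have "y \<in> ball x e \<inter> S2" by (simp add: dist_commute)
    then show "y \<in> H" using e T(3) by blast
  qed
  moreover have "x \<in> S2" using T(2) e(3) by blast
  ultimately show "x \<in> S2 \<and> (\<exists>r>0. \<forall>y\<in>S2. dist y x < r \<longrightarrow> y \<in> H)" using e(1) by blast
next
  assume "x \<in> S2 \<and> (\<exists>r>0. \<forall>y\<in>S2. dist y x < r \<longrightarrow> y \<in> H)"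
  then obtain r where r: "x \<in> S2" "r > 0" "\<forall>y\<in>S2. dist y x < r \<longrightarrow> y \<in> H" by blast
  have "openin (top_of_set S2) (S2 \<inter> ball x r)" unfolding openin_open by (intro exI[of _ "ball x r"]) simp
  moreover have "x \<in> S2 \<inter> ball x r" using r by simp
  moreover have "S2 \<inter> ball x r \<subseteq> H" using r(3) by (auto simp: dist_commute)
  ultimately show "x \<in> (top_of_set S2) interior_of H" unfolding interior_of_def by blast
qed



lemma hull_S2: "0 \<notin> C \<Longrightarrow> nrm ` C \<subseteq> S2"
proof
  fix y assume "0 \<notin> C" "y \<in> nrm ` C"
  then obtain z where "z \<in> C" "y = nrm z" by auto
  moreover have "z \<noteq> 0" using \<open>z \<in> C\<close> \<open>0 \<notin> C\<close> by auto
  ultimately show "y \<in> S2" using nrm_S2 by simp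
qed



lemma int_step:
  assumes C: "convex C" "0 \<notin> C" and u: "u \<in> nrm ` C"
    and w: "w \<in> (top_of_set S2) interior_of (nrm ` C)"
    and x: "x \<in> S2" and cbx: "cb u x w"
  shows "x \<in> (top_of_set S2) interior_of (nrm ` C)"
proof -
  have HS: "nrm ` C \<subseteq> S2" using hull_S2[OF C(2)] .
  obtain r where r: "w \<in> S2" "r > 0" "\<forall>y\<in>S2. dist y w < r \<longrightarrow> y \<in> nrm ` C"
    using w int_char[OF HS] by blast
  obtain \<alpha> \<beta> where ab: "\<alpha> > 0" "\<beta> > 0" "x = \<alpha> *\<^sub>R u + \<beta> *\<^sub>R w" using cbx cb_def by auto
  define \<delta> where "\<delta> = \<beta> * min r 1 / 2"
  have dpos: "\<delta> > 0" using ab r by (simp add: \<delta>_def)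
  have nw: "norm w = 1" using r by simp
  have "\<forall>y\<in>S2. dist y x < \<delta> \<longrightarrow> y \<in> nrm ` C"
  proof (intro ballI impI)
    fix y assume y: "y \<in> S2" "dist y x < \<delta>"
    define b where "b = y - \<alpha> *\<^sub>R u"
    have bd: "b - \<beta> *\<^sub>R w = y - x" unfolding b_def ab(3) by simp
    have nb: "norm (b - \<beta> *\<^sub>R w) < \<delta>" using y(2) bd by (simp add: dist_norm)
    have d2: "\<delta> \<le> \<beta> / 2" "\<delta> \<le> \<beta> * r / 2" using ab r by (auto simp: \<delta>_def)
    have nbw: "norm (\<beta> *\<^sub>R w) = \<beta>" using nw ab by simp
    have "\<beta> \<le> norm b + norm (b - \<beta> *\<^sub>R w)"
      using norm_triangle_ineq4[of b "b - \<beta> *\<^sub>R w"] nbw by (simp add: norm_minus_commute)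
    then have "norm b > 0" using nb d2 ab(2) by linarith
    then have b0: "b \<noteq> 0" by auto
    have bw0: "\<beta> *\<^sub>R w \<noteq> 0" using nbw ab by auto
    have "norm (nrm b - nrm (\<beta> *\<^sub>R w)) \<le> 2 * norm (b - \<beta> *\<^sub>R w) / norm (\<beta> *\<^sub>R w)"
      by (rule nrm_lip[OF bw0 b0])
    also have "\<dots> = 2 * norm (b - \<beta> *\<^sub>R w) / \<beta>" using nbw by simp
    also have "\<dots> < 2 * \<delta> / \<beta>" by (rule divide_strict_right_mono) (use nb ab in auto)
    also have "\<dots> \<le> r"
    proof -
      have "2 * \<delta> \<le> r * \<beta>" using d2 by (simp add: mult.commute)
      then show ?thesis by (simp add: pos_divide_le_eq[OF ab(2)])
    qed
    finally have "norm (nrm b - w) < r" using nrm_pos_scale[OF ab(2) r(1)] by simp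
    then have "nrm b \<in> nrm ` C" using r(3) nrm_S2[OF b0] by (simp add: dist_norm)
    moreover have "cb u y (nrm b)" unfolding cb_def
    proof (intro exI conjI)
      show "y = \<alpha> *\<^sub>R u + norm b *\<^sub>R nrm b" using b0 by (simp add: b_def nrm_def)
    qed (use ab \<open>norm b > 0\<close> in auto)
    ultimately show "y \<in> nrm ` C" using cone_comb[OF C u _ y(1)] by blast
  qed
  then show ?thesis using int_char[OF HS] x dpos by blast
qed



lemma zero_notin_seg:
  assumes "(p::point) \<in> S2" "q \<in> S2" "p \<noteq> - q"
  shows "0 \<notin> closed_segment p q"
proof
  assume "0 \<in> closed_segment p q"
  then obtain t where t: "0 \<le> t" "t \<le> 1" "0 = (1 - t) *\<^sub>R p + t *\<^sub>R q" by (auto simp: in_segment)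
  then have e: "(1 - t) *\<^sub>R p = - (t *\<^sub>R q)" by (simp add: eq_neg_iff_add_eq_0)
  then have "norm ((1 - t) *\<^sub>R p) = norm (t *\<^sub>R q)" by simp
  then have "1 - t = t" using assms t by simp
  then have "t = 1/2" by simp
  have e2: "(1 - 1/2::real) *\<^sub>R p = - ((1/2::real) *\<^sub>R q)" using e[unfolded \<open>t = 1/2\<close>] .
  then have "(1/2::real) *\<^sub>R p = (1/2::real) *\<^sub>R (- q)" by (simp only: scaleR_minus_right) simp
  then have "p = - q" using scaleR_cancel_left[of "1/2::real" p "-q"] by simp
  then show False using assms(3) by simp
qed



lemma hull_closed:
  assumes "finite A" "\<forall>x\<in>A. m \<bullet> x > 0"
  shows "closed (nrm ` (convex hull (A::point set)))"
proof -
  have sub: "convex hull A \<subseteq> {x. m \<bullet> x > 0}"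
    using assms(2) by (intro hull_minimal) (auto simp: convex_halfspace_gt)
  have "compact (convex hull A)" using assms(1) by (simp add: compact_convex_hull finite_imp_compact)
  moreover have "continuous_on (convex hull A) nrm"
    unfolding nrm_def using sub by (intro continuous_intros) auto
  ultimately show ?thesis by (intro compact_imp_closed compact_continuous_image)
qed



lemma attractor_pick:
  fixes P A :: "point set"
  assumes "finite P" "A \<subseteq> P \<union> uminus ` P" "finite A" "card A = card P" "no_antipodal A" "c \<in> P"
  shows "\<exists>v\<in>A. v = c \<or> v = - c"
proof -
  define g where "g x = (if x \<in> P then x else - x)" for x :: point
  have gP: "g ` A \<subseteq> P" using assms(2) by (auto simp: g_def)
  have "inj_on g A"
  proof
    fix x y assume xy: "x \<in> A" "y \<in> A" "g x = g y"
    show "x = y"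
    proof (cases "x \<in> P"; cases "y \<in> P")
      assume "x \<in> P" "y \<notin> P"
      then have "x = - y" using xy by (simp add: g_def)
      then show ?thesis using assms(5) xy unfolding no_antipodal_def by blast
    next
      assume "x \<notin> P" "y \<in> P"
      then have "y = - x" using xy by (simp add: g_def)
      then show ?thesis using assms(5) xy unfolding no_antipodal_def by blast
    qed (use xy in \<open>auto simp: g_def\<close>)
  qed
  then have "card (g ` A) = card P" using assms(4) by (simp add: card_image)
  then have "g ` A = P" using gP assms(1) by (simp add: card_subset_eq)
  then obtain v where "v \<in> A" "g v = c" using assms(6) by blast
  then show ?thesis by (auto simp: g_def split: if_splits)
qed


lemma e_nz:
  fixes n m v :: point
  assumes "n \<noteq> 0" "n \<bullet> v = 0" "m \<bullet> v > 0"
  shows "cross3 n m \<noteq> 0"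
proof
  assume "cross3 n m = 0"
  then have "collinear {0, n, m}" by (simp add: cross_eq_0)
  then have "n = 0 \<or> m = 0 \<or> (\<exists>c. m = c *\<^sub>R n)" by (simp only: collinear_lemma)
  then obtain c where "m = c *\<^sub>R n" using assms by auto
  then have "m \<bullet> v = 0" using assms(2) by simp
  then show False using assms(3) by simp
qed

lemma gdiff:
  fixes n m u w :: point
  assumes e: "cross3 n m \<noteq> 0" and u: "n \<bullet> u = 0" "m \<bullet> u > 0" and w: "n \<bullet> w = 0" "m \<bullet> w > 0"
  shows "(1/(m \<bullet> u)) *\<^sub>R u - (1/(m \<bullet> w)) *\<^sub>R w
       = ((cross3 n m \<bullet> u / (m \<bullet> u) - cross3 n m \<bullet> w / (m \<bullet> w)) / (cross3 n m \<bullet> cross3 n m)) *\<^sub>R cross3 n m"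
proof -
  define d where "d = (1/(m \<bullet> u)) *\<^sub>R u - (1/(m \<bullet> w)) *\<^sub>R w"
  have nd: "n \<bullet> d = 0" unfolding d_def using u w by (simp add: inner_diff_right)
  have md: "m \<bullet> d = 0" unfolding d_def using u w by (simp add: inner_diff_right)
  have de: "d \<bullet> cross3 n m = cross3 n m \<bullet> u / (m \<bullet> u) - cross3 n m \<bullet> w / (m \<bullet> w)"
    unfolding d_def by (simp add: inner_diff_left inner_commute[of u] inner_commute[of w])
  show ?thesis using perp_parallel[OF e nd md] de unfolding d_def by simp
qed

lemma line_cb:
  fixes n m u x w :: point
  assumes e: "cross3 n m \<noteq> 0"
    and u: "n \<bullet> u = 0" "m \<bullet> u > 0" and x: "n \<bullet> x = 0" "m \<bullet> x > 0" and w: "n \<bullet> w = 0" "m \<bullet> w > 0"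
    and o1: "cross3 n m \<bullet> u / (m \<bullet> u) < cross3 n m \<bullet> x / (m \<bullet> x)"
    and o2: "cross3 n m \<bullet> x / (m \<bullet> x) < cross3 n m \<bullet> w / (m \<bullet> w)"
  shows "cb u x w"
proof -
  define E where "E = cross3 n m"
  define su where "su = E \<bullet> u / (m \<bullet> u)"
  define sx where "sx = E \<bullet> x / (m \<bullet> x)"
  define sw where "sw = E \<bullet> w / (m \<bullet> w)"
  define gu where "gu = (1/(m \<bullet> u)) *\<^sub>R u"
  define gx where "gx = (1/(m \<bullet> x)) *\<^sub>R x"
  define gw where "gw = (1/(m \<bullet> w)) *\<^sub>R w"
  define ee where "ee = E \<bullet> E"
  have ee0: "ee \<noteq> 0" using e by (simp add: ee_def E_def)
  have d1: "gx - gu = ((sx - su) / ee) *\<^sub>R E"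
    using gdiff[OF e x u] unfolding gx_def gu_def sx_def su_def ee_def E_def by simp
  have d2: "gw - gu = ((sw - su) / ee) *\<^sub>R E"
    using gdiff[OF e w u] unfolding gw_def gu_def sw_def su_def ee_def E_def by simp
  have lt: "su < sx" "sx < sw" using o1 o2 by (simp_all add: su_def sx_def sw_def E_def)
  define t where "t = (sx - su) / (sw - su)"
  have t01: "0 < t" "t < 1" using lt by (simp_all add: t_def)
  have "(sx - su) / ee = t * ((sw - su) / ee)" using lt by (simp add: t_def)
  then have "gx - gu = t *\<^sub>R (gw - gu)" using d1 d2 by simp
  then have gx: "gx = (1 - t) *\<^sub>R gu + t *\<^sub>R gw" by (simp add: algebra_simps)
  have "x = (m \<bullet> x) *\<^sub>R gx" using x by (simp add: gx_def)
  also have "\<dots> = ((m \<bullet> x) * (1 - t) / (m \<bullet> u)) *\<^sub>R u + ((m \<bullet> x) * t / (m \<bullet> w)) *\<^sub>R w"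
    unfolding gx gu_def gw_def by (simp add: scaleR_add_right)
  finally have xe: "x = ((m \<bullet> x) * (1 - t) / (m \<bullet> u)) *\<^sub>R u + ((m \<bullet> x) * t / (m \<bullet> w)) *\<^sub>R w" .
  show ?thesis unfolding cb_def
    by (rule exI[of _ "(m \<bullet> x) * (1 - t) / (m \<bullet> u)"], rule conjI, use t01 u x in simp,
        rule exI[of _ "(m \<bullet> x) * t / (m \<bullet> w)"], use t01 x w xe in simp)
qed

lemma s_inj:
  fixes n m u w :: point
  assumes e: "cross3 n m \<noteq> 0" and u: "n \<bullet> u = 0" "m \<bullet> u > 0" "u \<in> S2" and w: "n \<bullet> w = 0" "m \<bullet> w > 0" "w \<in> S2"
    and eq: "cross3 n m \<bullet> u / (m \<bullet> u) = cross3 n m \<bullet> w / (m \<bullet> w)"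
  shows "u = w"
proof -
  have "(1/(m \<bullet> u)) *\<^sub>R u = (1/(m \<bullet> w)) *\<^sub>R w"
    using gdiff[OF e u(1,2) w(1,2)] eq by simp
  then have "nrm ((1/(m \<bullet> u)) *\<^sub>R u) = nrm ((1/(m \<bullet> w)) *\<^sub>R w)" by simp
  then show ?thesis using nrm_pos_scale u w by simp
qed

lemma four_points:
  fixes n m v x y z :: point
  assumes n0: "n \<noteq> 0"
    and S: "v \<in> S2" "x \<in> S2" "y \<in> S2" "z \<in> S2"
    and N: "n \<bullet> v = 0" "n \<bullet> x = 0" "n \<bullet> y = 0" "n \<bullet> z = 0"
    and M: "m \<bullet> v > 0" "m \<bullet> x > 0" "m \<bullet> y > 0" "m \<bullet> z > 0"
    and D: "v \<noteq> x" "v \<noteq> y" "v \<noteq> z" "x \<noteq> y" "x \<noteq> z" "y \<noteq> z"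
  shows "cb x v y \<or> cb x v z \<or> cb y v z \<or> cb v x z \<or> cb y x z \<or> cb v y z \<or> cb x y z"
proof -
  have e: "cross3 n m \<noteq> 0" using e_nz[OF n0 N(1) M(1)] .
  define s where "s p = cross3 n m \<bullet> p / (m \<bullet> p)" for p
  have L: "s p < s q \<Longrightarrow> s q < s r \<Longrightarrow> cb p q r"
    if "n \<bullet> p = 0" "m \<bullet> p > 0" "n \<bullet> q = 0" "m \<bullet> q > 0" "n \<bullet> r = 0" "m \<bullet> r > 0" for p q r
    using line_cb[OF e that] unfolding s_def .
  have B: "(s p < s q \<and> s q < s r) \<or> (s r < s q \<and> s q < s p) \<Longrightarrow> cb p q r"
    if "n \<bullet> p = 0" "m \<bullet> p > 0" "n \<bullet> q = 0" "m \<bullet> q > 0" "n \<bullet> r = 0" "m \<bullet> r > 0" for p q r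
  proof -
    assume "(s p < s q \<and> s q < s r) \<or> (s r < s q \<and> s q < s p)"
    then show "cb p q r"
    proof
      assume "s p < s q \<and> s q < s r"
      then show "cb p q r" using L[OF that] by simp
    next
      assume "s r < s q \<and> s q < s p"
      then have "cb r q p" using L[OF that(5,6,3,4,1,2)] by simp
      then show "cb p q r" by (rule cb_sym)
    qed
  qed
  have I: "s p \<noteq> s q"
    if "n \<bullet> p = 0" "m \<bullet> p > 0" "p \<in> S2" "n \<bullet> q = 0" "m \<bullet> q > 0" "q \<in> S2" "p \<noteq> q" for p q
  proof
    assume "s p = s q"
    then have "p = q" using s_inj[OF e that(1-6)] unfolding s_def by simp
    then show False using that(7) by simp
  qed
  have Ds: "s v \<noteq> s x" "s v \<noteq> s y" "s v \<noteq> s z" "s x \<noteq> s y" "s x \<noteq> s z" "s y \<noteq> s z"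
    using I[OF N(1) M(1) S(1) N(2) M(2) S(2) D(1)] I[OF N(1) M(1) S(1) N(3) M(3) S(3) D(2)]
      I[OF N(1) M(1) S(1) N(4) M(4) S(4) D(3)] I[OF N(2) M(2) S(2) N(3) M(3) S(3) D(4)]
      I[OF N(2) M(2) S(2) N(4) M(4) S(4) D(5)] I[OF N(3) M(3) S(3) N(4) M(4) S(4) D(6)] by simp_all
  have "((s x < s v \<and> s v < s y) \<or> (s y < s v \<and> s v < s x)) \<or>
        ((s x < s v \<and> s v < s z) \<or> (s z < s v \<and> s v < s x)) \<or>
        ((s y < s v \<and> s v < s z) \<or> (s z < s v \<and> s v < s y)) \<or>
        ((s v < s x \<and> s x < s z) \<or> (s z < s x \<and> s x < s v)) \<or>
        ((s y < s x \<and> s x < s z) \<or> (s z < s x \<and> s x < s y)) \<or>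
        ((s v < s y \<and> s y < s z) \<or> (s z < s y \<and> s y < s v)) \<or>
        ((s x < s y \<and> s y < s z) \<or> (s z < s y \<and> s y < s x))"
    using Ds by argo
  moreover note B[OF N(2) M(2) N(1) M(1) N(3) M(3)]
  moreover note B[OF N(2) M(2) N(1) M(1) N(4) M(4)]
  moreover note B[OF N(3) M(3) N(1) M(1) N(4) M(4)]
  moreover note B[OF N(1) M(1) N(2) M(2) N(4) M(4)]
  moreover note B[OF N(3) M(3) N(2) M(2) N(4) M(4)]
  moreover note B[OF N(1) M(1) N(3) M(3) N(4) M(4)]
  moreover note B[OF N(2) M(2) N(3) M(3) N(4) M(4)]
  ultimately show ?thesis by argo
qed


theorem mainTheorem14:
  fixes k :: nat and D :: "(point \<times> point) set" and P :: "point set"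
    and f :: "point \<times> point \<Rightarrow> point" and A :: "point set" and a :: "point \<times> point"
  assumes "spherical_diagram D"
    and "orientation k D P f"
    and "attractor k P A"
    and "a \<in> D"
    and "arc_set a \<inter> ((top_of_set S2) interior_of (spherical_hull A)) \<noteq> {}"
  shows "\<forall>x\<in>arc_set a \<inter> ((top_of_set S2) frontier_of (spherical_hull A)).
         \<forall>y\<in>arc_set a \<inter> ((top_of_set S2) frontier_of (spherical_hull A)). x = y"
proof -
  have isarc: "is_arc a" using assms(1,4) unfolding spherical_diagram_def by blast
  obtain p q where pq: "a = (p, q)" by (cases a)
  have arc: "p \<in> S2" "q \<in> S2" "p \<noteq> q" "p \<noteq> - q" using isarc unfolding is_arc_def pq by auto
  have orient: "P \<subseteq> S2" "finite P" "card P = k" "no_antipodal P" "f a \<in> P" "oriented_by a (f a)"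
    using assms(2,4) unfolding orientation_def by auto
  have att: "A \<subseteq> P \<union> uminus ` P" "finite A" "card A = k" "no_antipodal A"
    using assms(3) unfolding attractor_def by auto
  define c where "c = f a"
  obtain n where n: "n \<noteq> 0" "n \<bullet> c = 0" "\<forall>x\<in>arc_set a. n \<bullet> x = 0"
    and nc: "c \<notin> arc_set a" "- c \<notin> arc_set a"
    using orient(6) unfolding oriented_by_def c_def by blast
  have "card A = card P" using att(3) orient(3) by simp
  then obtain v where v: "v \<in> A" "v = c \<or> v = - c"
    using attractor_pick[OF orient(2) att(1) att(2) _ att(4) orient(5)] c_def by blast
  have "v \<in> P \<or> - v \<in> P" using att(1) v(1) by force
  then have vS: "v \<in> S2" using orient(1) by (metis mem_sphere_0 norm_minus_cancel subsetD)
  have vnarc: "v \<notin> arc_set a" using v(2) nc by auto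
  have nv: "n \<bullet> v = 0" using v(2) n(2) by auto
  define C where "C = closed_segment p q"
  have arcC: "arc_set a = nrm ` C" unfolding arc_set_def pq C_def by simp
  have C: "convex C" "0 \<notin> C" using zero_notin_seg[OF arc(1,2,4)] by (auto simp: C_def)
  show ?thesis
  proof (cases "\<exists>m. \<forall>x\<in>A. m \<bullet> x > 0")
    case False
    then have "spherical_hull A = S2" unfolding spherical_hull_def by (simp only: if_False)
    then have "(top_of_set S2) frontier_of (spherical_hull A) = {}"
      using frontier_of_topspace[of "top_of_set S2"] by simp
    then show ?thesis by simp
  next
    case True
    then obtain m where m: "\<forall>x\<in>A. m \<bullet> x > 0" by blast
    define K where "K = convex hull A"
    have H: "spherical_hull A = nrm ` K" unfolding spherical_hull_def K_def using True by simp
    have Ksub: "K \<subseteq> {x. m \<bullet> x > 0}" unfolding K_def using m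
      by (intro hull_minimal) (auto simp: convex_halfspace_gt)
    have K: "convex K" "0 \<notin> K" using Ksub by (auto simp: K_def)
    have HS: "nrm ` K \<subseteq> S2" by (rule hull_S2[OF K(2)])
    have Hm: "m \<bullet> h > 0" if hK: "h \<in> nrm ` K" for h
    proof -
      obtain z where z: "z \<in> K" "h = nrm z" using hK by auto
      have mz: "m \<bullet> z > 0" using z(1) Ksub by auto
      then have "z \<noteq> 0" by auto
      have "m \<bullet> h = (m \<bullet> z) / norm z" using z(2) by (simp add: nrm_def divide_inverse mult.commute)
      then show ?thesis using mz \<open>z \<noteq> 0\<close> by simp
    qed
    have vH: "v \<in> nrm ` K"
    proof -
      have "v \<in> K" unfolding K_def using v(1) by (rule hull_inc)
      then show ?thesis using nrm_unit[OF vS] by (metis image_eqI)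
    qed
    have closedK: "closed (nrm ` K)" using hull_closed[OF att(2) m] K_def by simp
    have clo: "(top_of_set S2) closure_of (nrm ` K) = nrm ` K"
      by (rule closure_of_closedin[OF closed_subset[OF HS closedK]])
    have front: "(top_of_set S2) frontier_of (nrm ` K) = nrm ` K - (top_of_set S2) interior_of (nrm ` K)"
      unfolding frontier_of_def clo ..
    have ne: "arc_set a \<inter> (top_of_set S2) interior_of (nrm ` K) \<noteq> {}" using assms(5) unfolding H .
    then obtain z where z0: "z \<in> arc_set a \<inter> (top_of_set S2) interior_of (nrm ` K)"
      unfolding ex_in_conv[symmetric] by (elim exE)
    have z: "z \<in> arc_set a" "z \<in> (top_of_set S2) interior_of (nrm ` K)" using z0 by (simp_all only: Int_iff)
    have zH: "z \<in> nrm ` K" using z(2) interior_of_subset by (rule subsetD[rotated])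
    show ?thesis unfolding H front
    proof (intro ballI)
      fix x y
      assume x: "x \<in> arc_set a \<inter> (nrm ` K - (top_of_set S2) interior_of (nrm ` K))"
        and y: "y \<in> arc_set a \<inter> (nrm ` K - (top_of_set S2) interior_of (nrm ` K))"
      show "x = y"
      proof (rule ccontr)
        assume xy: "x \<noteq> y"
        have xa: "x \<in> arc_set a" using x by blast
        have xH: "x \<in> nrm ` K" using x by blast
        have xi: "x \<notin> (top_of_set S2) interior_of (nrm ` K)" using x by blast
        have ya: "y \<in> arc_set a" using y by blast
        have yH: "y \<in> nrm ` K" using y by blast
        have yi: "y \<notin> (top_of_set S2) interior_of (nrm ` K)" using y by blast
        have S: "v \<in> S2" "x \<in> S2" "y \<in> S2" "z \<in> S2" using vS xH yH zH HS by auto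
        have N: "n \<bullet> v = 0" "n \<bullet> x = 0" "n \<bullet> y = 0" "n \<bullet> z = 0" using nv n(3) xa ya z(1) by auto
        have M: "m \<bullet> v > 0" "m \<bullet> x > 0" "m \<bullet> y > 0" "m \<bullet> z > 0" using Hm vH xH yH zH by auto
        have D: "v \<noteq> x" "v \<noteq> y" "v \<noteq> z" "x \<noteq> y" "x \<noteq> z" "y \<noteq> z"
          using vnarc xa ya z xi yi xy by auto
        have "cb x v y \<or> cb x v z \<or> cb y v z \<or> cb v x z \<or> cb y x z \<or> cb v y z \<or> cb x y z"
          by (rule four_points[OF n(1) S N M D])
        then show False
        proof (elim disjE)
          assume "cb x v y"
          then have "v \<in> nrm ` C" using cone_comb[OF C _ _ vS] xa ya arcC by auto
          then show False using vnarc arcC by simp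
        next
          assume "cb x v z"
          then have "v \<in> nrm ` C" using cone_comb[OF C _ _ vS] xa z(1) arcC by auto
          then show False using vnarc arcC by simp
        next
          assume "cb y v z"
          then have "v \<in> nrm ` C" using cone_comb[OF C _ _ vS] ya z(1) arcC by auto
          then show False using vnarc arcC by simp
        next
          assume "cb v x z"
          then have "x \<in> (top_of_set S2) interior_of (nrm ` K)" by (rule int_step[OF K vH z(2) S(2)])
          then show False using xi by simp
        next
          assume "cb y x z"
          then have "x \<in> (top_of_set S2) interior_of (nrm ` K)" by (rule int_step[OF K yH z(2) S(2)])
          then show False using xi by simp
        next
          assume "cb v y z"
          then have "y \<in> (top_of_set S2) interior_of (nrm ` K)" by (rule int_step[OF K vH z(2) S(3)])
          then show False using yi by simp
        next
          assume "cb x y z"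
          then have "y \<in> (top_of_set S2) interior_of (nrm ` K)" by (rule int_step[OF K xH z(2) S(3)])
          then show False using yi by simp
        qed
      qed
    qed
  qed
qed

end
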